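(* Let $N$ be a prime number and $n,t,s$ positive integers with $t\le n$ and $N\ge s+1$. Let $\vec u_1,\dots,\vec u_t\in\mathbb{Z}_N^n$ be linearly independent over $\mathbb{Z}_N$. Let $Q(s)=\{\vec x=(x_1,\dots,x_n)\in\mathbb{Z}_N^n: x_i\in\{0,1,\dots,s\},\ i=1,\dots,n\}$ and $L=\{\sum_{i=1}^t m_i\vec u_i: m_i\in\mathbb{Z}_N\}$. Then $|L\cap Q(s)|\le(s+1)^t$.
   Context: $\mathbb{Z}_N=\mathbb{Z}/N\mathbb{Z}$, viewed as the field with $N$ elements. *)

theory Defs
  imports "HOL-Number_Theory.Number_Theory"
begin

text \<open>Elements of Z_N^n are represented as functions nat => int with entries in
  {0..<N} at coordinates i < n and 0 elsewhere (canonical residues).\<close>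

definition ZNvec :: "int \<Rightarrow> nat \<Rightarrow> (nat \<Rightarrow> int) set" where
  "ZNvec N n = {x. (\<forall>i<n. 0 \<le> x i \<and> x i < N) \<and> (\<forall>i\<ge>n. x i = 0)}"

text \<open>Linear independence over Z_N of u_0,...,u_{t-1} in Z_N^n (indices shifted to 0-based).\<close>
definition lin_indep_ZN :: "int \<Rightarrow> nat \<Rightarrow> nat \<Rightarrow> (nat \<Rightarrow> nat \<Rightarrow> int) \<Rightarrow> bool" where
  "lin_indep_ZN N n t u \<longleftrightarrow>
     (\<forall>m :: nat \<Rightarrow> int. (\<forall>j<n. [(\<Sum>i<t. m i * u i j) = 0] (mod N))
        \<longrightarrow> (\<forall>i<t. [m i = 0] (mod N)))"

definition span_ZN :: "int \<Rightarrow> nat \<Rightarrow> nat \<Rightarrow> (nat \<Rightarrow> nat \<Rightarrow> int) \<Rightarrow> (nat \<Rightarrow> int) set" where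
  "span_ZN N n t u = {x. \<exists>m :: nat \<Rightarrow> int. (\<forall>i<t. 0 \<le> m i \<and> m i < N) \<and>
       (\<forall>j<n. x j = (\<Sum>i<t. m i * u i j) mod N) \<and> (\<forall>j\<ge>n. x j = 0)}"

definition Qbox :: "int \<Rightarrow> nat \<Rightarrow> nat \<Rightarrow> (nat \<Rightarrow> int) set" where
  "Qbox N n s = {x \<in> ZNvec N n. \<forall>i<n. x i \<in> {0..int s}}"

end

theory Submission
  imports Defs
begin

definition Cset :: "int \<Rightarrow> nat \<Rightarrow> nat set \<Rightarrow> nat set \<Rightarrow> (nat \<Rightarrow> int) \<Rightarrow> (nat \<Rightarrow> nat \<Rightarrow> int) \<Rightarrow> (nat \<Rightarrow> int) set" where
  "Cset N s J I y v = {f. \<exists>m::nat\<Rightarrow>int. (\<forall>j\<in>J. f j = (y j + (\<Sum>i\<in>I. m i * v i j)) mod N \<and> 0 \<le> f j \<and> f j \<le> int s)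
      \<and> (\<forall>j. j \<notin> J \<longrightarrow> f j = 0)}"

lemma key_alg:
  fixes N :: int
  assumes "N dvd (a - y0 - (mk * vkj + T))" "N dvd (vkj * w - 1)"
  shows "(yj' + (a - y0) * w * vkj' + (S - T * w * vkj')) mod N = (yj' + (mk * vkj' + S)) mod N"
proof -
  have eq: "(yj' + (a - y0) * w * vkj' + (S - T * w * vkj')) - (yj' + (mk * vkj' + S))
      = vkj' * ((a - y0 - (mk * vkj + T)) * w + mk * (vkj * w - 1))"
    by (simp add: algebra_simps)
  have "N dvd (yj' + (a - y0) * w * vkj' + (S - T * w * vkj')) - (yj' + (mk * vkj' + S))"
    unfolding eq using assms by simp
  then show ?thesis by (simp add: mod_eq_dvd_iff)
qed

lemma Cset_bound:
  assumes "finite J" "prime N"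
  shows "finite I \<Longrightarrow> finite (Cset N s J I y v) \<and> card (Cset N s J I y v) \<le> (s+1) ^ card I"
  using assms(1)
proof (induction J arbitrary: I y v rule: finite_induct)
  case empty
  have sub0: "Cset N s {} I y v \<subseteq> {\<lambda>_. 0}" unfolding Cset_def by auto
  have f0: "finite (Cset N s {} I y v)" using finite_subset[OF sub0] by simp
  have "card (Cset N s {} I y v) \<le> card {\<lambda>_. 0::int}" using card_mono[OF _ sub0] by simp
  then have "card (Cset N s {} I y v) \<le> 1" by simp
  also have "1 \<le> (s+1) ^ card I" by simp
  finally show ?case using f0 by simp
next
  case (insert j J)
  note IH = insert.IH
  show ?case
  proof (cases "\<forall>i\<in>I. v i j mod N = 0")
    case True
    have sub: "Cset N s (insert j J) I y v \<subseteq> (\<lambda>g. g(j := y j mod N)) ` Cset N s J I y v"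
    proof
      fix f assume "f \<in> Cset N s (insert j J) I y v"
      then obtain m where m: "\<forall>j'\<in>insert j J. f j' = (y j' + (\<Sum>i\<in>I. m i * v i j')) mod N \<and> 0 \<le> f j' \<and> f j' \<le> int s"
        "\<forall>j'. j' \<notin> insert j J \<longrightarrow> f j' = 0" unfolding Cset_def by blast
      have "[(\<Sum>i\<in>I. m i * v i j) = (\<Sum>i\<in>I. m i * 0)] (mod N)"
        apply (rule cong_sum) apply (rule cong_mult) using True by (auto simp: cong_def)
      then have "[y j + (\<Sum>i\<in>I. m i * v i j) = y j + 0] (mod N)" by (intro cong_add) auto
      then have fj: "f j = y j mod N" using m(1) by (simp add: cong_def)
      have "f(j:=0) \<in> Cset N s J I y v" unfolding Cset_def using m insert.hyps(2)
        by (intro CollectI exI[of _ m]) auto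
      moreover have "f = (f(j:=0))(j := y j mod N)" using fj by auto
      ultimately show "f \<in> (\<lambda>g. g(j := y j mod N)) ` Cset N s J I y v" by blast
    qed
    from IH[OF insert.prems(1), of y v] have "finite (Cset N s J I y v)" "card (Cset N s J I y v) \<le> (s+1) ^ card I" by auto
    then have "finite ((\<lambda>g. g(j := y j mod N)) ` Cset N s J I y v)" "card ((\<lambda>g. g(j := y j mod N)) ` Cset N s J I y v) \<le> (s+1) ^ card I"
      using card_image_le le_trans by blast+
    then show ?thesis using sub card_mono[OF _ sub] finite_subset[OF sub] le_trans by blast
  next
    case False
    then obtain k where k: "k \<in> I" "v k j mod N \<noteq> 0" by auto
    have "\<not> N dvd v k j" using k(2) by (simp add: dvd_eq_mod_eq_0)
    then have "coprime N (v k j)" by (rule prime_imp_coprime[OF assms(2)])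
    then have "coprime (v k j) N" by (simp only: coprime_commute)
    then obtain w where w: "[v k j * w = 1] (mod N)" using cong_solve_coprime_int by blast
    define ya where "ya = (\<lambda>(a::int) j'. y j' + (a - y j) * w * v k j')"
    define v' where "v' = (\<lambda>i j'. v i j' - v i j * w * v k j')"
    define I' where "I' = I - {k}"
    have sub: "Cset N s (insert j J) I y v \<subseteq> (\<Union>a\<in>{0..int s}. (\<lambda>g. g(j := a)) ` Cset N s J I' (ya a) v')"
    proof
      fix f assume "f \<in> Cset N s (insert j J) I y v"
      then obtain m where m: "\<forall>j'\<in>insert j J. f j' = (y j' + (\<Sum>i\<in>I. m i * v i j')) mod N \<and> 0 \<le> f j' \<and> f j' \<le> int s"
        "\<forall>j'. j' \<notin> insert j J \<longrightarrow> f j' = 0" unfolding Cset_def by blast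
      define a where "a = f j"
      have a: "a \<in> {0..int s}" using m(1) a_def by auto
      have "a mod N = (y j + (\<Sum>i\<in>I. m i * v i j)) mod N" using m(1) a_def by simp
      then have "N dvd (a - (y j + (\<Sum>i\<in>I. m i * v i j)))" by (simp only: mod_eq_dvd_iff)
      then have d1: "N dvd (a - y j - (\<Sum>i\<in>I. m i * v i j))" by (simp add: algebra_simps)
      have d2: "N dvd (v k j * w - 1)" using w by (simp add: cong_iff_dvd_diff dvd_diff_commute)
      have split: "\<And>j'. (\<Sum>i\<in>I. m i * v i j') = m k * v k j' + (\<Sum>i\<in>I'. m i * v i j')"
        unfolding I'_def using k(1) insert.prems(1) by (simp add: sum.remove)
      have key: "f j' = (ya a j' + (\<Sum>i\<in>I'. m i * v' i j')) mod N" if "j' \<in> J" for j'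
      proof -
        have s2: "(\<Sum>i\<in>I'. m i * v' i j') = (\<Sum>i\<in>I'. m i * v i j') - (\<Sum>i\<in>I'. m i * v i j) * w * v k j'"
        proof -
          have "(\<Sum>i\<in>I'. m i * v' i j') = (\<Sum>i\<in>I'. m i * v i j' - (m i * v i j) * (w * v k j'))"
            unfolding v'_def by (rule sum.cong) (auto simp: algebra_simps)
          also have "\<dots> = (\<Sum>i\<in>I'. m i * v i j') - (\<Sum>i\<in>I'. m i * v i j) * (w * v k j')"
            by (simp only: sum_subtractf sum_distrib_right)
          finally show ?thesis by (simp add: mult.assoc)
        qed
        have ya: "ya a j' = y j' + (a - y j) * w * v k j'" unfolding ya_def by simp
        have d1': "N dvd (a - y j - (m k * v k j + (\<Sum>i\<in>I'. m i * v i j)))" using d1 split[of j] by simp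
        have "(ya a j' + (\<Sum>i\<in>I'. m i * v' i j')) mod N = (y j' + (\<Sum>i\<in>I. m i * v i j')) mod N"
          unfolding ya s2 split[of j'] by (rule key_alg[OF d1' d2])
        then show ?thesis using m(1) that by auto
      qed
      have "f(j:=0) \<in> Cset N s J I' (ya a) v'" unfolding Cset_def using m insert.hyps(2) key
        by (intro CollectI exI[of _ m]) auto
      moreover have "f = (f(j:=0))(j := a)" using a_def by auto
      ultimately show "f \<in> (\<Union>a\<in>{0..int s}. (\<lambda>g. g(j := a)) ` Cset N s J I' (ya a) v')" using a by blast
    qed
    have fI': "finite I'" using insert.prems(1) I'_def by auto
    have cI: "card I = Suc (card I')" unfolding I'_def using k(1) insert.prems(1)
      using card_Suc_Diff1[OF insert.prems(1) k(1)] by simp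
    have each: "finite ((\<lambda>g. g(j := a)) ` Cset N s J I' (ya a) v') \<and> card ((\<lambda>g. g(j := a)) ` Cset N s J I' (ya a) v') \<le> (s+1) ^ card I'" for a
    proof -
      from IH[OF fI', of "ya a" v'] have f: "finite (Cset N s J I' (ya a) v')" and c: "card (Cset N s J I' (ya a) v') \<le> (s+1) ^ card I'" by auto
      show ?thesis using finite_imageI[OF f] le_trans[OF card_image_le[OF f] c] by blast
    qed
    let ?U = "(\<Union>a\<in>{0..int s}. (\<lambda>g. g(j := a)) ` Cset N s J I' (ya a) v')"
    have fU: "finite ?U" using each by auto
    have "card ?U \<le> (\<Sum>a\<in>{0..int s}. card ((\<lambda>g. g(j := a)) ` Cset N s J I' (ya a) v'))"
      by (rule card_UN_le) auto
    also have "\<dots> \<le> (\<Sum>a\<in>{0..int s}. (s+1) ^ card I')" by (rule sum_mono) (use each in auto)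
    also have "\<dots> = (s+1) ^ card I"
    proof -
      have "nat (int s + 1) = Suc s" by linarith
      then show ?thesis using cI by simp
    qed
    finally show ?thesis using card_mono[OF fU sub] finite_subset[OF sub fU] le_trans by blast
  qed
qed

theorem lemma24:
  fixes N :: int and n t s :: nat and u :: "nat \<Rightarrow> nat \<Rightarrow> int"
  assumes "prime N" and "0 < n" and "0 < t" and "0 < s" and "t \<le> n" and "N \<ge> int s + 1"
    and "\<forall>i<t. u i \<in> ZNvec N n"
    and "lin_indep_ZN N n t u"
  shows "card (span_ZN N n t u \<inter> Qbox N n s) \<le> (s + 1) ^ t"
proof -
  have sub: "span_ZN N n t u \<inter> Qbox N n s \<subseteq> Cset N s {..<n} {..<t} (\<lambda>_. 0) u"
  proof
    fix x assume x: "x \<in> span_ZN N n t u \<inter> Qbox N n s"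
    then obtain m where m: "\<forall>j<n. x j = (\<Sum>i<t. m i * u i j) mod N" "\<forall>j\<ge>n. x j = 0"
      unfolding span_ZN_def by blast
    have q: "\<forall>i<n. x i \<in> {0..int s}" using x unfolding Qbox_def by blast
    show "x \<in> Cset N s {..<n} {..<t} (\<lambda>_. 0) u" unfolding Cset_def
      using m q by (intro CollectI exI[of _ m]) auto
  qed
  have "finite (Cset N s {..<n} {..<t} (\<lambda>_. 0) u) \<and> card (Cset N s {..<n} {..<t} (\<lambda>_. 0) u) \<le> (s+1) ^ card {..<t}"
    by (rule Cset_bound) (use assms(1) in auto)
  then have fC: "finite (Cset N s {..<n} {..<t} (\<lambda>_. 0) u)" and cC: "card (Cset N s {..<n} {..<t} (\<lambda>_. 0) u) \<le> (s+1) ^ t" by auto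
  show ?thesis using le_trans[OF card_mono[OF fC sub] cC] .
qed

end
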